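(* Let $Y$ be a solid vector space and $(X,d)$ a cone metric space over $Y$. Suppose $(x_n)_{n\ge0}$ is a sequence in $X$ with $d(x_n,x_m)\preceq b_n$ for all $n,m\ge0$ with $m\ge n$, where $(b_n)$ is a sequence in $Y$ with $b_n\to0$. Then: (i) $(x_n)$ is a Cauchy sequence in $X$; (ii) if $(x_n)$ converges to a point $x\in X$, then $d(x_n,x)\preceq b_n$ for all $n\ge0$.
   Context: Vector space with convergence: a real vector space $Y$ with a relation $\to$ between sequences in $Y$ and points of $Y$ (uniqueness of limits not assumed) such that (C1) $x_n\to x$, $y_n\to y$ imply $x_n+y_n\to x+y$; (C2) $x_n\to x$, $\lambda\in\mathbb R$ imply $\lambda x_n\to\lambda x$; (C3) $\lambda_n\to\lambda$ in $\mathbb R$ imply $\lambda_n x\to\lambda x$. $A\subseteq Y$ is open if $x_n\to x\in A$ implies $x_n\in A$ for all but finitely many $n$; closed if $x_n\to x$, $x_n\in A$ $\forall n$ imply $x\in A$; $A^\circ$ is the union of all open subsets of $A$. A cone is a nonempty closed $K$ with $\lambda K\subseteq K$ ($\lambda\ge0$), $K+K\subseteq K$, $K\cap(-K)=\{0\}$; solid if $K\ne\{0\}$, $K^\circ\ne\emptyset$. A vector ordering is a partial order $\preceq$ with (V1) $x\preceq y\Rightarrow x+z\preceq y+z$; (V2) $\lambda\ge0$, $x\preceq y\Rightarrow\lambda x\preceq\lambda y$; (V3) $x_n\to x$, $y_n\to y$, $x_n\preceq y_n$ $\forall n\Rightarrow x\preceq y$. Solid vector space: positive cone $K=\{x:x\succeq0\}$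 solid, with $x\prec y$ iff $y-x\in K^\circ$. Cone metric space over $Y$: nonempty $X$ with $d\colon X\times X\to Y$, $d(x,y)\succeq0$, $d(x,y)=0$ iff $x=y$, $d(x,y)=d(y,x)$, $d(x,y)\preceq d(x,z)+d(z,y)$. Convergence in $X$: $x_n\to x$ iff for every $c\succ0$, $d(x_n,x)\prec c$ for all but finitely many $n$. Cauchy: for every $c\succ0$ there is $N$ with $d(x_n,x_m)\prec c$ for all $n,m>N$. *)

theory Defs
  imports Complex_Main
begin

text \<open>A vector space with convergence: a real vector space together with a relation
  conv between sequences and points (uniqueness of limits not assumed).\<close>

definition vs_convergence :: "((nat \<Rightarrow> 'a::real_vector) \<Rightarrow> 'a \<Rightarrow> bool) \<Rightarrow> bool" where
  "vs_convergence conv \<longleftrightarrow>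
     (\<forall>xs x ys y. conv xs x \<and> conv ys y \<longrightarrow> conv (\<lambda>n. xs n + ys n) (x + y)) \<and>
     (\<forall>xs x (l::real). conv xs x \<longrightarrow> conv (\<lambda>n. l *\<^sub>R xs n) (l *\<^sub>R x)) \<and>
     (\<forall>(ls::nat \<Rightarrow> real) l x. ls \<longlonglongrightarrow> l \<longrightarrow> conv (\<lambda>n. ls n *\<^sub>R x) (l *\<^sub>R x))"

definition open_conv :: "((nat \<Rightarrow> 'a) \<Rightarrow> 'a \<Rightarrow> bool) \<Rightarrow> 'a set \<Rightarrow> bool" where
  "open_conv conv A \<longleftrightarrow>
     (\<forall>xs x. conv xs x \<and> x \<in> A \<longrightarrow> (\<forall>\<^sub>F n in sequentially. xs n \<in> A))"

definition closed_conv :: "((nat \<Rightarrow> 'a) \<Rightarrow> 'a \<Rightarrow> bool) \<Rightarrow> 'a set \<Rightarrow> bool" where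
  "closed_conv conv A \<longleftrightarrow> (\<forall>xs x. conv xs x \<and> (\<forall>n. xs n \<in> A) \<longrightarrow> x \<in> A)"

definition interior_conv :: "((nat \<Rightarrow> 'a) \<Rightarrow> 'a \<Rightarrow> bool) \<Rightarrow> 'a set \<Rightarrow> 'a set" where
  "interior_conv conv A = \<Union>{U. U \<subseteq> A \<and> open_conv conv U}"

definition is_cone :: "((nat \<Rightarrow> 'a::real_vector) \<Rightarrow> 'a \<Rightarrow> bool) \<Rightarrow> 'a set \<Rightarrow> bool" where
  "is_cone conv K \<longleftrightarrow> K \<noteq> {} \<and> closed_conv conv K \<and>
     (\<forall>(l::real) x. l \<ge> 0 \<and> x \<in> K \<longrightarrow> l *\<^sub>R x \<in> K) \<and>
     (\<forall>x y. x \<in> K \<and> y \<in> K \<longrightarrow> x + y \<in> K) \<and>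
     K \<inter> uminus ` K = {0}"

definition solid_cone :: "((nat \<Rightarrow> 'a::real_vector) \<Rightarrow> 'a \<Rightarrow> bool) \<Rightarrow> 'a set \<Rightarrow> bool" where
  "solid_cone conv K \<longleftrightarrow> is_cone conv K \<and> K \<noteq> {0} \<and> interior_conv conv K \<noteq> {}"

definition vector_ordering ::
  "((nat \<Rightarrow> 'a::real_vector) \<Rightarrow> 'a \<Rightarrow> bool) \<Rightarrow> ('a \<Rightarrow> 'a \<Rightarrow> bool) \<Rightarrow> bool" where
  "vector_ordering conv le \<longleftrightarrow>
     (\<forall>x. le x x) \<and> (\<forall>x y. le x y \<and> le y x \<longrightarrow> x = y) \<and>
     (\<forall>x y z. le x y \<and> le y z \<longrightarrow> le x z) \<and>
     (\<forall>x y z. le x y \<longrightarrow> le (x + z) (y + z)) \<and>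
     (\<forall>(l::real) x y. l \<ge> 0 \<and> le x y \<longrightarrow> le (l *\<^sub>R x) (l *\<^sub>R y)) \<and>
     (\<forall>xs x ys y. conv xs x \<and> conv ys y \<and> (\<forall>n. le (xs n) (ys n)) \<longrightarrow> le x y)"

definition pos_cone :: "('a::real_vector \<Rightarrow> 'a \<Rightarrow> bool) \<Rightarrow> 'a set" where
  "pos_cone le = {x. le 0 x}"

definition solid_vector_space ::
  "((nat \<Rightarrow> 'a::real_vector) \<Rightarrow> 'a \<Rightarrow> bool) \<Rightarrow> ('a \<Rightarrow> 'a \<Rightarrow> bool) \<Rightarrow> bool" where
  "solid_vector_space conv le \<longleftrightarrow> vs_convergence conv \<and> vector_ordering conv le \<and>
     solid_cone conv (pos_cone le)"

definition sless ::
  "((nat \<Rightarrow> 'a::real_vector) \<Rightarrow> 'a \<Rightarrow> bool) \<Rightarrow> ('a \<Rightarrow> 'a \<Rightarrow> bool) \<Rightarrow> 'a \<Rightarrow> 'a \<Rightarrow> bool" where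
  "sless conv le x y \<longleftrightarrow> y - x \<in> interior_conv conv (pos_cone le)"

definition cone_metric ::
  "('a::real_vector \<Rightarrow> 'a \<Rightarrow> bool) \<Rightarrow> 'b set \<Rightarrow> ('b \<Rightarrow> 'b \<Rightarrow> 'a) \<Rightarrow> bool" where
  "cone_metric le X d \<longleftrightarrow> X \<noteq> {} \<and>
     (\<forall>x\<in>X. \<forall>y\<in>X. le 0 (d x y)) \<and>
     (\<forall>x\<in>X. \<forall>y\<in>X. d x y = 0 \<longleftrightarrow> x = y) \<and>
     (\<forall>x\<in>X. \<forall>y\<in>X. d x y = d y x) \<and>
     (\<forall>x\<in>X. \<forall>y\<in>X. \<forall>z\<in>X. le (d x y) (d x z + d z y))"

definition cm_tendsto ::
  "((nat \<Rightarrow> 'a::real_vector) \<Rightarrow> 'a \<Rightarrow> bool) \<Rightarrow> ('a \<Rightarrow> 'a \<Rightarrow> bool) \<Rightarrow> ('b \<Rightarrow> 'b \<Rightarrow> 'a)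
     \<Rightarrow> (nat \<Rightarrow> 'b) \<Rightarrow> 'b \<Rightarrow> bool" where
  "cm_tendsto conv le d xs x \<longleftrightarrow>
     (\<forall>c. sless conv le 0 c \<longrightarrow> (\<forall>\<^sub>F n in sequentially. sless conv le (d (xs n) x) c))"

definition cm_cauchy ::
  "((nat \<Rightarrow> 'a::real_vector) \<Rightarrow> 'a \<Rightarrow> bool) \<Rightarrow> ('a \<Rightarrow> 'a \<Rightarrow> bool) \<Rightarrow> ('b \<Rightarrow> 'b \<Rightarrow> 'a)
     \<Rightarrow> (nat \<Rightarrow> 'b) \<Rightarrow> bool" where
  "cm_cauchy conv le d xs \<longleftrightarrow>
     (\<forall>c. sless conv le 0 c \<longrightarrow> (\<exists>N. \<forall>n m. n > N \<and> m > N \<longrightarrow> sless conv le (d (xs n) (xs m)) c))"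

end

theory Submission
  imports Defs
begin

lemma int_iff: "x \<in> interior_conv conv A \<longleftrightarrow> (\<exists>U. open_conv conv U \<and> U \<subseteq> A \<and> x \<in> U)"
  unfolding interior_conv_def by blast

lemma const_conv: assumes "vs_convergence conv" shows "conv (\<lambda>n. c) c"
proof -
  have "conv (\<lambda>n. (\<lambda>n. 1::real) n *\<^sub>R c) (1 *\<^sub>R c)"
    using assms unfolding vs_convergence_def by blast
  thus ?thesis by simp
qed

lemma open_translate:
  assumes vs: "vs_convergence conv" and U: "open_conv conv U"
  shows "open_conv conv ((\<lambda>y. y + k) ` U)"
  unfolding open_conv_def
proof (intro allI impI)
  fix ys y assume h: "conv ys y \<and> y \<in> (\<lambda>y. y + k) ` U"
  have c: "conv (\<lambda>n. -k) (-k)" using const_conv[OF vs] .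
  have "conv (\<lambda>n. ys n + -k) (y + -k)" using vs h c unfolding vs_convergence_def by blast
  moreover have "y + -k \<in> U" using h by auto
  ultimately have "\<forall>\<^sub>F n in sequentially. ys n + -k \<in> U" using U unfolding open_conv_def by blast
  thus "\<forall>\<^sub>F n in sequentially. ys n \<in> (\<lambda>y. y + k) ` U"
  proof (rule eventually_mono)
    fix n assume "ys n + -k \<in> U"
    moreover have "ys n = (ys n + -k) + k" by simp
    ultimately show "ys n \<in> (\<lambda>y. y + k) ` U" by blast
  qed
qed

lemma open_scale:
  assumes vs: "vs_convergence conv" and U: "open_conv conv U" and l: "(l::real) > 0"
  shows "open_conv conv ((\<lambda>y. l *\<^sub>R y) ` U)"
  unfolding open_conv_def
proof (intro allI impI)
  fix ys y assume h: "conv ys y \<and> y \<in> (\<lambda>y. l *\<^sub>R y) ` U"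
  have "conv (\<lambda>n. (1/l) *\<^sub>R ys n) ((1/l) *\<^sub>R y)" using vs h unfolding vs_convergence_def by blast
  moreover have "(1/l) *\<^sub>R y \<in> U" using h l by auto
  ultimately have "\<forall>\<^sub>F n in sequentially. (1/l) *\<^sub>R ys n \<in> U" using U unfolding open_conv_def by blast
  thus "\<forall>\<^sub>F n in sequentially. ys n \<in> (\<lambda>y. l *\<^sub>R y) ` U"
  proof (rule eventually_mono)
    fix n assume "(1/l) *\<^sub>R ys n \<in> U"
    moreover have "ys n = l *\<^sub>R ((1/l) *\<^sub>R ys n)" using l by simp
    ultimately show "ys n \<in> (\<lambda>y. l *\<^sub>R y) ` U" by blast
  qed
qed

theorem theorem9p20:
  fixes conv :: "(nat \<Rightarrow> 'a::real_vector) \<Rightarrow> 'a \<Rightarrow> bool"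
    and le :: "'a \<Rightarrow> 'a \<Rightarrow> bool"
    and X :: "'b set" and d :: "'b \<Rightarrow> 'b \<Rightarrow> 'a"
    and xs :: "nat \<Rightarrow> 'b" and b :: "nat \<Rightarrow> 'a"
  assumes "solid_vector_space conv le"
    and "cone_metric le X d"
    and "\<forall>n. xs n \<in> X"
    and "\<forall>n m. n \<le> m \<longrightarrow> le (d (xs n) (xs m)) (b n)"
    and "conv b 0"
  shows "cm_cauchy conv le d xs \<and>
         (\<forall>x\<in>X. cm_tendsto conv le d xs x \<longrightarrow> (\<forall>n. le (d (xs n) x) (b n)))"
proof -
  note S = assms(1)[unfolded solid_vector_space_def]
  have vs: "vs_convergence conv" using S by blast
  have vo: "vector_ordering conv le" using S by blast
  have refl: "\<And>x. le x x" and trans: "\<And>x y z. le x y \<Longrightarrow> le y z \<Longrightarrow> le x z"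
    and add: "\<And>x y z. le x y \<Longrightarrow> le (x+z) (y+z)"
    and lim: "\<And>xs x ys y. conv xs x \<Longrightarrow> conv ys y \<Longrightarrow> (\<forall>n. le (xs n) (ys n)) \<Longrightarrow> le x y"
    using vo unfolding vector_ordering_def by blast+
  let ?K = "pos_cone le"
  have c1: "\<And>xs x ys y. conv xs x \<Longrightarrow> conv ys y \<Longrightarrow> conv (\<lambda>n. xs n + ys n) (x + y)"
    and c2: "\<And>xs x l. conv xs x \<Longrightarrow> conv (\<lambda>n. l *\<^sub>R xs n) (l *\<^sub>R x)"
    and c3: "\<And>ls l x. ls \<longlonglongrightarrow> l \<Longrightarrow> conv (\<lambda>n. ls n *\<^sub>R x) (l *\<^sub>R x)"
    using vs unfolding vs_convergence_def by blast+
  have intadd: "u + k \<in> interior_conv conv ?K" if u: "u \<in> interior_conv conv ?K" and k: "le 0 k" for u k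
  proof -
    obtain U where U: "open_conv conv U" "U \<subseteq> ?K" "u \<in> U" using u unfolding int_iff by blast
    have sub: "(\<lambda>y. y + k) ` U \<subseteq> ?K"
    proof
      fix z assume "z \<in> (\<lambda>y. y + k) ` U"
      then obtain y where y: "y \<in> U" "z = y + k" by blast
      have "y \<in> ?K" using y(1) U(2) by (rule subsetD[rotated])
      hence y0: "le 0 y" unfolding pos_cone_def by simp
      have "le (0 + k) (y + k)" using add[OF y0] .
      hence "le k (y + k)" by simp
      hence "le 0 (y+k)" by (rule trans[OF k])
      thus "z \<in> ?K" using y(2) unfolding pos_cone_def by simp
    qed
    have "u + k \<in> (\<lambda>y. y + k) ` U" using U(3) by (rule imageI)
    with open_translate[OF vs U(1)] sub show ?thesis unfolding int_iff by blast
  qed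
  have intK: "\<And>u. u \<in> interior_conv conv ?K \<Longrightarrow> le 0 u"
    unfolding interior_conv_def pos_cone_def by blast
  have le_sless: "sless conv le a c" if "le a b" "sless conv le b c" for a b c
  proof -
    have "le (a + -a) (b + -a)" using add[OF that(1)] .
    hence "le 0 (b - a)" by simp
    from intadd[OF that(2)[unfolded sless_def] this] show ?thesis
      unfolding sless_def by (simp add: algebra_simps)
  qed
  have evb: "\<forall>\<^sub>F n in sequentially. sless conv le (b n) c" if c: "sless conv le 0 c" for c
  proof -
    have ci: "c \<in> interior_conv conv ?K" using c unfolding sless_def by simp
    obtain U where U: "open_conv conv U" "U \<subseteq> ?K" "c \<in> U" using ci unfolding int_iff by blast
    have "conv (\<lambda>n. (-1::real) *\<^sub>R b n) ((-1::real) *\<^sub>R 0)" using c2[OF assms(5)] .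
    hence "conv (\<lambda>n. c + (-1::real) *\<^sub>R b n) (c + (-1::real) *\<^sub>R 0)" using c1[OF const_conv[OF vs]] by blast
    hence "conv (\<lambda>n. c - b n) c" by simp
    hence "\<forall>\<^sub>F n in sequentially. c - b n \<in> U" using U unfolding open_conv_def by blast
    thus ?thesis
    proof (rule eventually_mono)
      fix n assume "c - b n \<in> U"
      hence "c - b n \<in> interior_conv conv ?K" using U(1,2) unfolding int_iff by blast
      thus "sless conv le (b n) c" unfolding sless_def .
    qed
  qed
  note CM = assms(2)[unfolded cone_metric_def]
  have symX: "\<forall>x\<in>X. \<forall>y\<in>X. d x y = d y x" using CM by (elim conjE)
  have triX: "\<forall>x\<in>X. \<forall>y\<in>X. \<forall>z\<in>X. le (d x y) (d x z + d z y)" using CM by (elim conjE)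
  have sym: "\<And>n m. d (xs n) (xs m) = d (xs m) (xs n)" using symX assms(3) by simp
  have cauchy: "cm_cauchy conv le d xs"
    unfolding cm_cauchy_def
  proof (intro allI impI)
    fix c assume c: "sless conv le 0 c"
    obtain N where N: "\<And>n. n \<ge> N \<Longrightarrow> sless conv le (b n) c"
      using evb[OF c] unfolding eventually_sequentially by blast
    have "sless conv le (d (xs n) (xs m)) c" if "n > N" "m > N" for n m
    proof (cases "n \<le> m")
      case True
      thus ?thesis using le_sless assms(4) N that by (meson less_imp_le)
    next
      case False
      hence "le (d (xs m) (xs n)) (b m)" using assms(4) by simp
      thus ?thesis using le_sless N that sym by (metis less_imp_le)
    qed
    thus "\<exists>N. \<forall>n m. N < n \<and> N < m \<longrightarrow> sless conv le (d (xs n) (xs m)) c" by blast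
  qed
  have part2: "le (d (xs n) x) (b n)" if x: "x \<in> X" and t: "cm_tendsto conv le d xs x" for x n
  proof -
    have bound: "le (d (xs n) x) (b n + c)" if c: "sless conv le 0 c" for c
    proof -
      obtain M where M: "\<And>m. m \<ge> M \<Longrightarrow> sless conv le (d (xs m) x) c"
        using t c unfolding cm_tendsto_def eventually_sequentially by blast
      define m where "m = max M n"
      have m: "m \<ge> n" "sless conv le (d (xs m) x) c" using M unfolding m_def by auto
      have tri: "le (d (xs n) x) (d (xs n) (xs m) + d (xs m) x)" using triX x assms(3) by blast
      have "le (d (xs n) (xs m) + d (xs m) x) (b n + d (xs m) x)" using add assms(4) m(1) by blast
      moreover have "le 0 (c - d (xs m) x)" using intK m(2) unfolding sless_def by simp
      hence "le (0 + (b n + d (xs m) x)) (c - d (xs m) x + (b n + d (xs m) x))" using add by blast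
      hence "le (b n + d (xs m) x) (b n + c)" by (simp add: algebra_simps)
      ultimately show ?thesis using tri trans by blast
    qed
    obtain e where e: "e \<in> interior_conv conv ?K"
      using S unfolding solid_cone_def by blast
    obtain U where U: "open_conv conv U" "U \<subseteq> ?K" "e \<in> U" using e int_iff by metis
    have "le (d (xs n) x) (b n + (1 / real (Suc k)) *\<^sub>R e)" for k
    proof -
      have pos: "(1 / real (Suc k)) > 0" by simp
      have "(1 / real (Suc k)) *\<^sub>R e \<in> (\<lambda>y. (1 / real (Suc k)) *\<^sub>R y) ` U" using U by blast
      moreover have "(\<lambda>y. (1 / real (Suc k)) *\<^sub>R y) ` U \<subseteq> ?K"
      proof
        fix z assume "z \<in> (\<lambda>y. (1 / real (Suc k)) *\<^sub>R y) ` U"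
        then obtain y where y: "y \<in> U" "z = (1 / real (Suc k)) *\<^sub>R y" by blast
        have "le 0 y" using y U unfolding pos_cone_def by auto
        hence "le ((1 / real (Suc k)) *\<^sub>R 0) ((1 / real (Suc k)) *\<^sub>R y)"
          using vo pos unfolding vector_ordering_def by (meson less_imp_le)
        thus "z \<in> ?K" using y unfolding pos_cone_def by simp
      qed
      ultimately have "sless conv le 0 ((1 / real (Suc k)) *\<^sub>R e)"
        using open_scale[OF vs U(1) pos] int_iff unfolding sless_def by (metis diff_zero)
      thus ?thesis by (rule bound)
    qed
    moreover have "conv (\<lambda>k. b n + (1 / real (Suc k)) *\<^sub>R e) (b n + 0 *\<^sub>R e)"
      using c1[OF const_conv[OF vs] c3[OF LIMSEQ_inverse_real_of_nat[unfolded inverse_eq_divide]]] .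
    ultimately have "le (d (xs n) x) (b n + 0 *\<^sub>R e)" using lim[OF const_conv[OF vs]] by blast
    thus ?thesis by simp
  qed
  show ?thesis using cauchy part2 by blast
qed

end
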